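(* Let $n\ge 1$ and let $x_k=-\cos\frac{k\pi}{n}$, $k=0,\dots,n$ (the Chebyshev points of the second kind). Let $\theta_0,\dots,\theta_n$ be real numbers and $\hat x_k:=(1+\theta_k)x_k$. Then for every $k\in\{0,\dots,n\}$, \[ \sum_{j\neq k}|r_{jk}(\mathbf{x},\hat{\mathbf{x}})|\le 2.6\,\|\theta\|_\infty\, n^2 . \]
   Context: $r_{jk}(\mathbf{x},\hat{\mathbf{x}}):=\dfrac{\hat x_k-\hat x_j}{x_k-x_j}-1$ for $j\neq k$, and $\|\theta\|_\infty=\max_k|\theta_k|$. *)

theory Defs
  imports "HOL-Analysis.Analysis"
begin

definition cheb2 :: "nat \<Rightarrow> nat \<Rightarrow> real" where
  "cheb2 n k = - cos (real k * pi / real n)"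

definition rjk :: "(nat \<Rightarrow> real) \<Rightarrow> (nat \<Rightarrow> real) \<Rightarrow> nat \<Rightarrow> nat \<Rightarrow> real" where
  "rjk x xh j k = (xh k - xh j) / (x k - x j) - 1"

definition infnorm_upto :: "nat \<Rightarrow> (nat \<Rightarrow> real) \<Rightarrow> real" where
  "infnorm_upto n \<theta> = Max ((\<lambda>k. \<bar>\<theta> k\<bar>) ` {0..n})"

end

theory Submission
  imports Defs
begin

lemma sin_cubic: "x \<ge> 0 \<Longrightarrow> sin x \<ge> x - x^3/6" for x :: real
proof -
  assume x: "x \<ge> 0"
  have M: "\<bar>sin x - (\<Sum>m<3. sin_coeff m * x ^ m)\<bar> \<le> inverse (fact 3) * \<bar>x\<bar> ^ 3"
    by (rule Maclaurin_sin_bound)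
  have S: "(\<Sum>m<3. sin_coeff m * x ^ m) = x"
    by (simp add: eval_nat_numeral sin_coeff_def)
  have F: "inverse (fact 3) * \<bar>x\<bar> ^ 3 = x^3/6"
  proof -
    have "(fact 3 :: real) = 6" by (simp add: eval_nat_numeral)
    moreover have "\<bar>x\<bar> = x" using x by simp
    moreover have "inverse (6::real) * x ^ 3 = x^3/6" by (metis divide_inverse mult.commute)
    ultimately show ?thesis by (simp only:)
  qed
  have "\<bar>sin x - x\<bar> \<le> x^3/6" using M unfolding S F .
  then have "- (sin x - x) \<le> x^3/6" by (rule abs_le_D2)
  then show ?thesis by linarith
qed

lemma aux_inv_mult: "1/(B*C) = (1/B)*(1/(C::real))" by simp
lemma aux_inv_le: "0<C \<Longrightarrow> 1 \<le> C*D \<Longrightarrow> 1/C \<le> (D::real)" by (simp add: divide_le_eq mult.commute)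

lemma inv_sin_sq:
  fixes b :: real
  assumes b0: "0 < b" and b1: "b \<le> pi/2"
  shows "1 / (sin b)^2 \<le> 1 / b^2 + 0.95"
proof -
  define t where "t = b^2/6"
  have pi2: "pi \<le> 3.1416" using pi_approx by (simp add: power_numeral)
  have "b \<le> 1.5708" using b1 pi2 by linarith
  hence "b^2 \<le> 1.5708^2" using b0 by (intro power_mono) auto
  hence t1: "t \<le> 0.42" unfolding t_def by (simp add: power2_eq_square)
  have t0: "t > 0" unfolding t_def using b0 by simp
  have s: "sin b \<ge> b * (1 - t)" using sin_cubic[of b] b0
    by (simp add: t_def power3_eq_cube power2_eq_square algebra_simps)
  have bt: "b * (1 - t) > 0" using b0 t1 by simp
  have ss: "(sin b)^2 \<ge> (b * (1 - t))^2" using s bt by (intro power_mono) auto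
  have q: "1 \<le> (1 - t)^2 * (1 + 5.7 * t)"
  proof -
    have E: "(1 - t)^2 * (1 + 5.7 * t) - 1 = t * (5.7 * (t - 0.42)^2 + (2.69452 - 5.612 * t))"
      by (simp add: power2_eq_square field_simps)
    have N: "0 \<le> t * (5.7 * (t - 0.42)^2 + (2.69452 - 5.612 * t))"
      using t0 t1 by (intro mult_nonneg_nonneg) auto
    have "0 \<le> (1 - t)^2 * (1 + 5.7 * t) - 1" by (subst E) (rule N)
    then show ?thesis by (simp only: diff_ge_0_iff_ge)
  qed
  have pos: "(b * (1 - t))^2 > 0" using bt by (rule zero_less_power)
  have "1 / (sin b)^2 \<le> 1 / (b * (1 - t))^2"
  proof (rule divide_left_mono[OF ss])
    have "(sin b)^2 > 0" using pos ss by linarith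
    then show "0 < (sin b)^2 * (b * (1 - t))^2" using pos by (rule mult_pos_pos)
  qed simp
  also have "\<dots> \<le> 1 / b^2 + 0.95"
  proof -
    have "b^2 = 6 * t" unfolding t_def by simp
    have "1 / (b * (1 - t))^2 = (1 / b^2) * (1 / (1-t)^2)"
      by (simp only: power_mult_distrib aux_inv_mult)
    also have "\<dots> \<le> (1 / b^2) * (1 + 5.7 * t)"
    proof (rule mult_left_mono)
      have "(1-t)^2 > 0" using t1 by simp
      then show "1 / (1-t)^2 \<le> 1 + 5.7 * t" using q by (rule aux_inv_le)
    qed simp
    also have "\<dots> = 1 / b^2 + 5.7 * t / b^2" by (simp add: ring_distribs)
    also have "5.7 * t / b^2 = 0.95" using \<open>b^2 = 6 * t\<close> t0 by simp
    finally show ?thesis .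
  qed
  finally show ?thesis .
qed

lemma sum_inv_sq: "(\<Sum>d\<in>{1..m}. 1 / (real d)^2) \<le> 2 - 2 / (real m + 1)"
proof (induction m)
  case 0 then show ?case by simp
next
  case (Suc m)
  have "(\<Sum>d\<in>{1..Suc m}. 1 / (real d)^2) = (\<Sum>d\<in>{1..m}. 1 / (real d)^2) + 1 / (real m + 1)^2"
    by simp
  also have "\<dots> \<le> 2 - 2 / (real m + 1) + 1 / (real m + 1)^2" using Suc by simp
  also have "\<dots> \<le> 2 - 2 / (real (Suc m) + 1)"
  proof -
    define a where "a = real m + 1"
    have a: "a \<ge> 1" unfolding a_def by simp
    have "1 / a^2 \<le> 2 / a - 2 / (a + 1)"
    proof -
      have "2 / a - 2 / (a + 1) = 2 / (a * (a + 1))" using a by (simp add: field_simps)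
      moreover have "1 / a^2 \<le> 2 / (a * (a + 1))"
      proof -
        have e: "1 / a^2 = 2 / (2 * a^2)" by simp
        have "a * (a + 1) \<le> 2 * a^2" using a by (simp add: power2_eq_square algebra_simps)
        moreover have "0 < a * (a + 1)" using a by simp
        moreover have p: "0 < a * ((a + 1) * a^2)" using a by simp
        ultimately show ?thesis unfolding e using divide_left_mono[of "a*(a+1)" "2*a^2" 2] by simp
      qed
      ultimately show ?thesis by simp
    qed
    then show ?thesis unfolding a_def by (simp add: add.commute)
  qed
  finally show ?case .
qed


lemma sum_sq_dist:
  assumes "k \<le> n"
  shows "(\<Sum>j\<in>{0..n} - {k}. 1 / (real k - real j)^2) \<le> 4"
proof -
  have split: "{0..n} - {k} = {0..<k} \<union> {k<..n}" using assms by auto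
  have "(\<Sum>j\<in>{0..n} - {k}. 1 / (real k - real j)^2)
      = (\<Sum>j\<in>{0..<k}. 1 / (real k - real j)^2) + (\<Sum>j\<in>{k<..n}. 1 / (real k - real j)^2)"
    unfolding split by (rule sum.union_disjoint) auto
  also have "(\<Sum>j\<in>{0..<k}. 1 / (real k - real j)^2) = (\<Sum>d\<in>{1..k}. 1 / (real d)^2)"
    by (rule sum.reindex_bij_witness[where i="\<lambda>d. k - d" and j="\<lambda>j. k - j"]) (auto simp: of_nat_diff)
  also have "(\<Sum>j\<in>{k<..n}. 1 / (real k - real j)^2) = (\<Sum>d\<in>{1..n-k}. 1 / (real d)^2)"
    by (rule sum.reindex_bij_witness[where i="\<lambda>d. k + d" and j="\<lambda>j. j - k"])
       (auto simp: of_nat_diff power2_commute)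
  also have "(\<Sum>d\<in>{1..k}. 1 / (real d)^2) + (\<Sum>d\<in>{1..n-k}. 1 / (real d)^2) \<le> 2 + 2"
  proof (rule add_mono)
    show "(\<Sum>d\<in>{1..k}. 1 / (real d)^2) \<le> 2" using sum_inv_sq[of k] by (smt (verit) divide_nonneg_nonneg of_nat_0_le_iff)
    show "(\<Sum>d\<in>{1..n-k}. 1 / (real d)^2) \<le> 2" using sum_inv_sq[of "n-k"] by (smt (verit) divide_nonneg_nonneg of_nat_0_le_iff)
  qed
  finally show ?thesis by simp
qed


lemma sin_abs_eq: "\<bar>y\<bar> \<le> pi \<Longrightarrow> \<bar>sin y\<bar> = sin \<bar>y\<bar>" for y :: real
proof (cases "y \<ge> 0")
  case True
  assume "\<bar>y\<bar> \<le> pi"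
  then show ?thesis using True sin_ge_zero[of y] by simp
next
  case False
  assume "\<bar>y\<bar> \<le> pi"
  then show ?thesis using False sin_ge_zero[of "-y"] by simp
qed

lemma sin_mid_ge:
  fixes u b :: real
  assumes "0 \<le> b" "b \<le> u" "u + b \<le> pi"
  shows "sin b \<le> sin u"
proof (cases "u \<le> pi/2")
  case True
  then show ?thesis using assms by (intro sin_monotone_2pi_le) auto
next
  case False
  have "sin b \<le> sin (pi - u)" using assms False by (intro sin_monotone_2pi_le) auto
  then show ?thesis by simp
qed

lemma term_bound:
  fixes n j k :: nat and \<theta> :: "nat \<Rightarrow> real" and \<epsilon> :: real
  assumes n: "n \<ge> 1" and jn: "j \<le> n" and kn: "k \<le> n" and jk: "j \<noteq> k"
    and tj: "\<bar>\<theta> j\<bar> \<le> \<epsilon>" and tk: "\<bar>\<theta> k\<bar> \<le> \<epsilon>"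
  shows "\<bar>rjk (cheb2 n) (\<lambda>i. (1 + \<theta> i) * cheb2 n i) j k\<bar>
         \<le> \<epsilon> * (4 * (real n)^2 / (pi^2 * (real k - real j)^2) + 0.95)"
proof -
  define A where "A = real j * pi / real n"
  define B where "B = real k * pi / real n"
  define b where "b = \<bar>real k - real j\<bar> * pi / (2 * real n)"
  define u where "u = (A + B) / 2"
  have npos: "real n > 0" using n by simp
  have A0: "A \<ge> 0" and B0: "B \<ge> 0" unfolding A_def B_def by auto
  have Api: "A \<le> pi" unfolding A_def using jn npos by (simp add: field_simps)
  have Bpi: "B \<le> pi" unfolding B_def using kn npos by (simp add: field_simps)
  have bdef2: "b = \<bar>(B - A) / 2\<bar>"
  proof -
    have "(B - A) / 2 = (real k - real j) * pi / (2 * real n)"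
      unfolding A_def B_def using npos by (simp add: field_simps)
    then show ?thesis unfolding b_def using npos pi_gt_zero by (simp add: abs_mult abs_divide)
  qed
  have dpos: "\<bar>real k - real j\<bar> \<ge> 1" using jk by linarith
  have b0: "b > 0" unfolding b_def using dpos npos by simp
  have bpi2: "b \<le> pi/2" using bdef2 A0 B0 Api Bpi by auto
  have xj: "cheb2 n j = - cos A" and xk: "cheb2 n k = - cos B"
    unfolding cheb2_def A_def B_def by simp_all
  have diff: "cheb2 n k - cheb2 n j = 2 * sin u * sin ((B - A)/2)"
    unfolding xj xk u_def using cos_diff_cos[of A B] by simp
  have s1: "\<bar>sin ((B - A)/2)\<bar> = sin b"
    unfolding bdef2 using A0 B0 Api Bpi by (intro sin_abs_eq) auto
  have ub1: "b \<le> u" unfolding u_def bdef2 using A0 B0 Api Bpi by (auto simp: abs_if field_simps)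
  have ub2: "u + b \<le> pi" unfolding u_def bdef2 using A0 B0 Api Bpi by (auto simp: abs_if field_simps)
  have s2: "sin b \<le> sin u"
    using b0 ub1 ub2 by (intro sin_mid_ge) auto
  have sbpos: "sin b > 0" using b0 bpi2 by (intro sin_gt_zero) auto
  have den: "\<bar>cheb2 n k - cheb2 n j\<bar> \<ge> 2 * (sin b)^2"
  proof -
    have "\<bar>cheb2 n k - cheb2 n j\<bar> = 2 * \<bar>sin u\<bar> * sin b"
      unfolding diff s1[symmetric] by (simp add: abs_mult)
    moreover have "\<bar>sin u\<bar> * sin b \<ge> sin b * sin b"
      using s2 sbpos by (intro mult_right_mono) auto
    ultimately show ?thesis by (simp add: power2_eq_square)
  qed
  have denpos: "2 * (sin b)^2 > 0" using sbpos by simp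
  have ne: "cheb2 n k - cheb2 n j \<noteq> 0" using den denpos by auto
  have r: "rjk (cheb2 n) (\<lambda>i. (1 + \<theta> i) * cheb2 n i) j k
           = (\<theta> k * cheb2 n k - \<theta> j * cheb2 n j) / (cheb2 n k - cheb2 n j)"
    unfolding rjk_def using ne by (simp add: field_simps)
  have num: "\<bar>\<theta> k * cheb2 n k - \<theta> j * cheb2 n j\<bar> \<le> 2 * \<epsilon>"
  proof -
    have "\<bar>cheb2 n k\<bar> \<le> 1" "\<bar>cheb2 n j\<bar> \<le> 1" unfolding xj xk by auto
    then have "\<bar>\<theta> k * cheb2 n k\<bar> \<le> \<epsilon>" "\<bar>\<theta> j * cheb2 n j\<bar> \<le> \<epsilon>"
      using tj tk by (auto simp: abs_mult intro: mult_le_one[THEN order_trans] 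
         order_trans[OF mult_mono[of _ \<epsilon> _ 1]])
    then show ?thesis by linarith
  qed
  have "\<bar>rjk (cheb2 n) (\<lambda>i. (1 + \<theta> i) * cheb2 n i) j k\<bar>
        = \<bar>\<theta> k * cheb2 n k - \<theta> j * cheb2 n j\<bar> / \<bar>cheb2 n k - cheb2 n j\<bar>"
    unfolding r by (simp add: abs_divide)
  also have "\<dots> \<le> (2 * \<epsilon>) / (2 * (sin b)^2)"
    using num den denpos by (intro frac_le) auto
  also have "\<dots> = \<epsilon> * (1 / (sin b)^2)" by simp
  also have "\<dots> \<le> \<epsilon> * (1 / b^2 + 0.95)"
  proof (rule mult_left_mono)
    show "1 / (sin b)^2 \<le> 1 / b^2 + 0.95" using b0 bpi2 by (rule inv_sin_sq)
    show "0 \<le> \<epsilon>" using tj by linarith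
  qed
  also have "1 / b^2 = 4 * (real n)^2 / (pi^2 * (real k - real j)^2)"
    unfolding b_def using npos by (simp add: field_simps power_mult_distrib power2_abs)
  finally show ?thesis .
qed

theorem theorem1:
  fixes n :: nat and \<theta> :: "nat \<Rightarrow> real" and k :: nat
  assumes "n \<ge> 1" and "k \<le> n"
  shows "(\<Sum>j\<in>{0..n} - {k}.
            \<bar>rjk (cheb2 n) (\<lambda>i. (1 + \<theta> i) * cheb2 n i) j k\<bar>)
         \<le> 2.6 * infnorm_upto n \<theta> * (real n)^2"
proof -
  define \<epsilon> where "\<epsilon> = infnorm_upto n \<theta>"
  have tb: "\<bar>\<theta> i\<bar> \<le> \<epsilon>" if "i \<le> n" for i
    unfolding \<epsilon>_def infnorm_upto_def using that by (intro Max_ge) auto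
  have e0: "\<epsilon> \<ge> 0" using tb[of 0] by linarith
  define c where "c = \<epsilon> * (4 * (real n)^2 / pi^2)"
  have c0: "c \<ge> 0" unfolding c_def using e0 by simp
  have card: "card ({0..n} - {k}) = n" using assms(2) by simp
  have "(\<Sum>j\<in>{0..n} - {k}. \<bar>rjk (cheb2 n) (\<lambda>i. (1 + \<theta> i) * cheb2 n i) j k\<bar>)
     \<le> (\<Sum>j\<in>{0..n} - {k}. \<epsilon> * (4 * (real n)^2 / (pi^2 * (real k - real j)^2) + 0.95))"
    using assms by (intro sum_mono term_bound) (auto intro: tb)
  also have "\<dots> = (\<Sum>j\<in>{0..n} - {k}. c * (1 / (real k - real j)^2) + \<epsilon> * 0.95)"
    unfolding c_def by (intro sum.cong) (auto simp: field_simps)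
  also have "\<dots> = c * (\<Sum>j\<in>{0..n} - {k}. 1 / (real k - real j)^2) + real n * (\<epsilon> * 0.95)"
    by (simp add: sum.distrib sum_distrib_left card)
  also have "\<dots> \<le> c * 4 + real n * (\<epsilon> * 0.95)"
    using sum_sq_dist[OF assms(2)] c0 by (intro add_right_mono mult_left_mono) auto
  also have "\<dots> \<le> 2.6 * \<epsilon> * (real n)^2"
  proof -
    have pi: "pi \<ge> 3.14" using pi_approx by (simp add: power_numeral)
    have p2: "98596/10000 \<le> pi^2" using power_mono[OF pi, of 2] by (simp add: power2_eq_square)
    have "16 / pi^2 \<le> 1.65"
    proof -
      have "pi^2 > 0" by simp
      moreover have "16 \<le> 1.65 * pi^2" using p2 by (simp add: power_numeral)
      ultimately show ?thesis by (simp add: divide_le_eq)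
    qed
    moreover have "c * 4 = \<epsilon> * (real n)^2 * (16 / pi^2)" unfolding c_def by (simp add: mult_ac)
    moreover have "0 \<le> \<epsilon> * (real n)^2" using e0 by simp
    ultimately have "c * 4 \<le> \<epsilon> * (real n)^2 * 1.65"
      by (metis mult_left_mono)
    moreover have "real n * (\<epsilon> * 0.95) \<le> \<epsilon> * (real n)^2 * 0.95"
    proof -
      have "real n \<le> (real n)^2" using assms(1) by (simp add: power2_eq_square)
      then show ?thesis using e0 by (simp add: mult_left_mono mult.commute mult.left_commute)
    qed
    ultimately show ?thesis by (simp add: algebra_simps)
  qed
  finally show ?thesis unfolding \<epsilon>_def .
qed

end
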